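(* Let $A \in \mathbb{C}^{N\times N}$, let $\mathcal{P}$ be a linear subspace of $\mathbb{C}^N$, and let $\{\omega_j\}_{j\in\mathbb{N}} \subset \mathbb{C}\setminus\{0\}$. Let $\mathcal{G}_j$, $j \in \mathbb{N}_0$, be the Sonneveld spaces and $p_{i,j}$ the stabilization polynomials defined from these data (see context). Then for all $i<j$ in $\mathbb{N}_0$, $$\mathcal{G}_j = p_{i,j}(A)\cdot\big(\mathcal{G}_i \cap \mathcal{K}_{j-i}(A^H;\mathcal{P})^{\perp}\big).$$
   Context: For a subspace $\mathcal{T}\le\mathbb{C}^N$ and $j\in\mathbb{N}$, the block Krylov subspace of level $j$ is $\mathcal{K}_j(A;\mathcal{T}) := \operatorname{span}\{A^k \mathcal{T} : k=0,\dots,j-1\}$ (the sum of the subspaces $A^k\mathcal{T}$), and $\mathcal{K}_j(A^H;\mathcal{P})^\perp$ denotes the orthogonal complement of $\mathcal{K}_j(A^H;\mathcal{P})$ in $\mathbb{C}^N$ with respect to the standard Hermitian inner product; $A^H$ is the conjugate transpose. Sonneveld spaces: $\mathcal{G}_0 := \mathbb{C}^N$ and $\mathcal{G}_j := (I - \omega_j A)\cdot(\mathcal{G}_{j-1}\cap \mathcal{P}^\perp)$ for $j\in\mathbb{N}$. Stabilization polynomials: $p_{i,j}(t) := \prod_{k=i+1}^{j}(1-\omega_k t)$ for $j>i\ge 0$. *)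

theory Defs
  imports "HOL-Analysis.Analysis" "HOL-Computational_Algebra.Polynomial"
begin

text \<open>Complex N x N matrices are rendered as complex^'n^'n (N = CARD('n)),
  vectors of C^N as complex^'n; complex-linear subspaces via vec.subspace.\<close>

primrec mat_pow :: "complex^'n^'n \<Rightarrow> nat \<Rightarrow> complex^'n^'n" where
  "mat_pow A 0 = mat 1"
| "mat_pow A (Suc k) = A ** mat_pow A k"

definition poly_mat :: "complex poly \<Rightarrow> complex^'n^'n \<Rightarrow> complex^'n^'n" where
  "poly_mat p A = (\<Sum>k\<le>degree p. mat (coeff p k) ** mat_pow A k)"

definition conj_transpose :: "complex^'n^'n \<Rightarrow> complex^'n^'n" where
  "conj_transpose A = (\<chi> i j. cnj (A $ j $ i))"

definition herm_inner :: "complex^'n \<Rightarrow> complex^'n \<Rightarrow> complex" where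
  "herm_inner x y = (\<Sum>i\<in>UNIV. x $ i * cnj (y $ i))"

definition orth_compl :: "(complex^'n) set \<Rightarrow> (complex^'n) set" where
  "orth_compl S = {x. \<forall>y\<in>S. herm_inner x y = 0}"

definition block_krylov :: "complex^'n^'n \<Rightarrow> (complex^'n) set \<Rightarrow> nat \<Rightarrow> (complex^'n) set" where
  "block_krylov A T j = vec.span (\<Union>k<j. (\<lambda>v. mat_pow A k *v v) ` T)"

primrec sonneveld :: "complex^'n^'n \<Rightarrow> (complex^'n) set \<Rightarrow> (nat \<Rightarrow> complex) \<Rightarrow> nat \<Rightarrow> (complex^'n) set" where
  "sonneveld A P \<omega> 0 = UNIV"
| "sonneveld A P \<omega> (Suc j) =
     (\<lambda>v. (mat 1 - mat (\<omega> (Suc j)) ** A) *v v) ` (sonneveld A P \<omega> j \<inter> orth_compl P)"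

definition stab_poly :: "(nat \<Rightarrow> complex) \<Rightarrow> nat \<Rightarrow> nat \<Rightarrow> complex poly" where
  "stab_poly \<omega> i j = (\<Prod>k\<in>{i+1..j}. [:1, - \<omega> k:])"

end

theory Submission
  imports Defs
begin

lemma mat_mv: "(mat c :: complex^'n^'n) *v x = c *s x"
  by (simp add: vec_eq_iff matrix_vector_mult_def mat_def if_distrib[of "\<lambda>f. f _"] if_distrib[of "\<lambda>u. u * _"] cong: if_cong)

lemma matc_mult_mv: "((mat c :: complex^'n^'n) ** M) *v x = c *s (M *v x)"
  by (simp add: matrix_vector_mul_assoc[symmetric] mat_mv)

lemma sum_mv: "(sum f S :: complex^'n^'n) *v v = (\<Sum>k\<in>S. f k *v v)"
  by (induction S rule: infinite_finite_induct) (simp_all add: matrix_vector_mult_add_rdistrib)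

lemma poly_mat_ext:
  assumes "degree p \<le> n"
  shows "poly_mat p A *v v = (\<Sum>k\<le>n. coeff p k *s (mat_pow A k *v v))"
proof -
  have "poly_mat p A *v v = (\<Sum>k\<le>degree p. coeff p k *s (mat_pow A k *v v))"
    unfolding poly_mat_def by (simp add: sum_mv matc_mult_mv)
  also have "\<dots> = (\<Sum>k\<le>n. coeff p k *s (mat_pow A k *v v))"
    using assms by (intro sum.mono_neutral_left) (auto simp: coeff_eq_0)
  finally show ?thesis .
qed

lemma poly_mat_add: "poly_mat (p + q) A *v v = poly_mat p A *v v + poly_mat q A *v v"
proof -
  let ?n = "max (degree p) (degree q)"
  have "degree (p+q) \<le> ?n" by (rule degree_add_le_max)
  then show ?thesis
    by (simp add: poly_mat_ext[of _ ?n] vector_sadd_rdistrib sum.distrib)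
qed

lemma poly_mat_smult: "poly_mat (smult c p) A *v v = c *s (poly_mat p A *v v)"
  by (simp add: poly_mat_ext[of _ "degree p"] vec.scale_sum_right)

lemma poly_mat_diff: "poly_mat (p - q) A *v v = poly_mat p A *v v - poly_mat q A *v v"
  using poly_mat_add[of "p - q" q A v] by simp

lemma poly_mat_X: "poly_mat (pCons 0 p) A *v v = A *v (poly_mat p A *v v)"
proof -
  have "poly_mat (pCons 0 p) A *v v = (\<Sum>k\<le>Suc (degree p). coeff (pCons 0 p) k *s (mat_pow A k *v v))"
    by (rule poly_mat_ext) (simp add: degree_pCons_le)
  also have "\<dots> = (\<Sum>k\<le>degree p. coeff p k *s (mat_pow A (Suc k) *v v))"
    by (subst sum.atMost_Suc_shift) simp
  also have "\<dots> = A *v (poly_mat p A *v v)"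
    by (simp add: poly_mat_ext[of _ "degree p"] vec.sum vec.scale matrix_vector_mul_assoc)
  finally show ?thesis .
qed

lemma poly_mat_lin: "poly_mat (p * [:1, - w:]) A *v v = (mat 1 - mat w ** A) *v (poly_mat p A *v v)"
proof -
  have eq: "p * [:1, - w:] = p - smult w (pCons 0 p)"
    by (simp add: algebra_simps)
  have "poly_mat (p * [:1, - w:]) A *v v = poly_mat p A *v v - w *s (A *v (poly_mat p A *v v))"
    by (subst eq) (simp only: poly_mat_diff poly_mat_smult poly_mat_X)
  then show ?thesis
    by (simp add: matrix_vector_mult_diff_rdistrib matc_mult_mv)
qed

lemma mat_pow_comm: "mat_pow A k ** A = A ** mat_pow A k"
proof (induction k)
  case (Suc k)
  have "mat_pow A (Suc k) ** A = A ** (mat_pow A k ** A)" by (simp add: matrix_mul_assoc)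
  also have "\<dots> = A ** mat_pow A (Suc k)" using Suc by simp
  finally show ?case .
qed simp

lemma herm_A: "herm_inner (A *v x) y = herm_inner x (conj_transpose A *v y)"
proof -
  have "herm_inner (A *v x) y = (\<Sum>i\<in>UNIV. \<Sum>j\<in>UNIV. A$i$j * x$j * cnj (y$i))"
    unfolding herm_inner_def matrix_vector_mult_def by (simp add: sum_distrib_right)
  also have "\<dots> = (\<Sum>j\<in>UNIV. \<Sum>i\<in>UNIV. A$i$j * x$j * cnj (y$i))"
    by (rule sum.swap)
  also have "\<dots> = (\<Sum>j\<in>UNIV. x$j * (\<Sum>i\<in>UNIV. A$i$j * cnj (y$i)))"
    by (simp add: sum_distrib_left mult_ac)
  also have "\<dots> = herm_inner x (conj_transpose A *v y)"
    unfolding herm_inner_def conj_transpose_def matrix_vector_mult_def by (simp add: cnj_sum)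
  finally show ?thesis .
qed

lemma herm_pow: "herm_inner (mat_pow A k *v x) y = herm_inner x (mat_pow (conj_transpose A) k *v y)"
proof (induction k arbitrary: y)
  case 0 then show ?case by simp
next
  case (Suc k)
  have "herm_inner (mat_pow A (Suc k) *v x) y = herm_inner (mat_pow A k *v x) (conj_transpose A *v y)"
    by (simp add: matrix_vector_mul_assoc[symmetric] herm_A)
  also have "\<dots> = herm_inner x (mat_pow (conj_transpose A) k *v (conj_transpose A *v y))"
    by (rule Suc)
  also have "\<dots> = herm_inner x (mat_pow (conj_transpose A) (Suc k) *v y)"
    by (simp add: matrix_vector_mul_assoc mat_pow_comm)
  finally show ?case .
qed


lemma herm_add_right: "herm_inner v (y + z) = herm_inner v y + herm_inner v z"
  unfolding herm_inner_def by (simp add: distrib_left sum.distrib)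

lemma herm_scale_right: "herm_inner v (c *s y) = cnj c * herm_inner v y"
  unfolding herm_inner_def by (simp add: sum_distrib_left mult_ac)

lemma herm_zero_right: "herm_inner v 0 = 0"
  unfolding herm_inner_def by simp

lemma herm_scale_left: "herm_inner (c *s x) y = c * herm_inner x y"
  unfolding herm_inner_def by (simp add: sum_distrib_left mult_ac)

lemma herm_sum_left: "herm_inner (sum f S) y = (\<Sum>k\<in>S. herm_inner (f k) y)"
  unfolding herm_inner_def by (induction S rule: infinite_finite_induct) (simp_all add: distrib_right sum.distrib)

lemma orth_span: "v \<in> orth_compl (vec.span S) \<longleftrightarrow> v \<in> orth_compl S"
proof
  assume "v \<in> orth_compl (vec.span S)"
  then show "v \<in> orth_compl S" unfolding orth_compl_def using vec.span_superset[of S] by (simp add: subset_iff)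
next
  assume a: "v \<in> orth_compl S"
  have sub: "vec.subspace {y. herm_inner v y = 0}"
    unfolding vec.subspace_def by (simp add: herm_add_right herm_scale_right herm_zero_right)
  have "vec.span S \<subseteq> {y. herm_inner v y = 0}"
    by (rule vec.span_minimal) (use a sub in \<open>simp_all add: orth_compl_def subset_iff\<close>)
  then show "v \<in> orth_compl (vec.span S)" unfolding orth_compl_def by (simp add: subset_iff)
qed

lemma orth_krylov: "v \<in> orth_compl (block_krylov B P m) \<longleftrightarrow>
   (\<forall>k\<in>{..<m}. \<forall>y\<in>P. herm_inner v (mat_pow B k *v y) = 0)"
proof -
  have "v \<in> orth_compl (block_krylov B P m) \<longleftrightarrow> v \<in> orth_compl (\<Union>k<m. (\<lambda>v. mat_pow B k *v v) ` P)"
    unfolding block_krylov_def by (rule orth_span)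
  also have "\<dots> \<longleftrightarrow> (\<forall>k\<in>{..<m}. \<forall>y\<in>P. herm_inner v (mat_pow B k *v y) = 0)"
    unfolding orth_compl_def by (simp add: ball_UN lessThan_iff)
  finally show ?thesis .
qed

lemma A1: "{i+1..i + Suc m} = insert (Suc (i+m)) {i+1..(i+m::nat)}" by auto

lemma stab_Suc: "stab_poly \<omega> i (i + Suc m) = stab_poly \<omega> i (i + m) * [:1, - \<omega> (Suc (i + m)):]"
  unfolding stab_poly_def A1 by (simp add: mult.commute)

lemma stab_deg:
  assumes "\<forall>k\<ge>1. \<omega> k \<noteq> 0"
  shows "degree (stab_poly \<omega> i (i + m)) = m \<and> lead_coeff (stab_poly \<omega> i (i + m)) \<noteq> 0"
proof (induction m)
  case 0
  have "stab_poly \<omega> i (i + 0) = 1" unfolding stab_poly_def by simp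
  then show ?case by simp
next
  case (Suc m)
  define p where "p = stab_poly \<omega> i (i + m)"
  define q where "q = [:1, - \<omega> (Suc (i + m)):]"
  have w: "\<omega> (Suc (i + m)) \<noteq> 0" using assms by auto
  have dp: "degree p = m" using Suc.IH unfolding p_def by (rule conjunct1)
  have lp: "lead_coeff p \<noteq> 0" using Suc.IH unfolding p_def by (rule conjunct2)
  have ne: "p \<noteq> 0" using lp by auto
  have dq: "degree q = 1" using w by (simp add: q_def)
  have lq: "lead_coeff q \<noteq> 0" using dq w by (simp add: q_def)
  have ne2: "q \<noteq> 0" using lq by auto
  have "degree (p * q) = Suc m" using degree_mult_eq[OF ne ne2] dp dq by simp
  moreover have "lead_coeff (p * q) \<noteq> 0" using lp lq by (simp add: lead_coeff_mult)
  ultimately show ?case unfolding stab_Suc p_def q_def by simp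
qed

lemma key:
  assumes "v \<in> orth_compl (block_krylov (conj_transpose A) P m)" "degree p = m" "y \<in> P"
  shows "herm_inner (poly_mat p A *v v) y = coeff p m * herm_inner v (mat_pow (conj_transpose A) m *v y)"
proof -
  have "herm_inner (poly_mat p A *v v) y = (\<Sum>k<Suc m. coeff p k * herm_inner v (mat_pow (conj_transpose A) k *v y))"
    using assms(2) by (simp add: poly_mat_ext[of p m] herm_sum_left herm_scale_left herm_pow lessThan_Suc_atMost)
  also have "\<dots> = coeff p m * herm_inner v (mat_pow (conj_transpose A) m *v y)"
    using assms(1,3) by (simp add: orth_krylov)
  finally show ?thesis .
qed

lemma main:
  assumes "\<forall>k\<ge>1. \<omega> k \<noteq> 0"
  shows "sonneveld A P \<omega> (i + m) =
    (\<lambda>v. poly_mat (stab_poly \<omega> i (i + m)) A *v v) `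
      (sonneveld A P \<omega> i \<inter> orth_compl (block_krylov (conj_transpose A) P m))"
proof (induction m)
  case 0
  have "poly_mat (stab_poly \<omega> i i) A *v v = v" for v
    by (simp add: stab_poly_def poly_mat_ext[of _ 0])
  moreover have "orth_compl (block_krylov (conj_transpose A) P 0) = UNIV"
    using orth_krylov by blast
  ultimately show ?case by simp
next
  case (Suc m)
  define Q where "Q = poly_mat (stab_poly \<omega> i (i + m)) A"
  define S where "S = (\<lambda>m. orth_compl (block_krylov (conj_transpose A) P m))"
  define f where "f = (\<lambda>v. (mat 1 - mat (\<omega> (Suc (i + m))) ** A) *v v)"
  have dg: "degree (stab_poly \<omega> i (i + m)) = m" and lc: "coeff (stab_poly \<omega> i (i + m)) m \<noteq> 0"
    using stab_deg[OF assms, of i m] by metis+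
  have eqv: "Q *v v \<in> orth_compl P \<longleftrightarrow> v \<in> S (Suc m)" if v: "v \<in> S m" for v
  proof -
    have "Q *v v \<in> orth_compl P \<longleftrightarrow> (\<forall>y\<in>P. herm_inner v (mat_pow (conj_transpose A) m *v y) = 0)"
      using key[OF v[unfolded S_def] dg] lc unfolding orth_compl_def Q_def by auto
    also have "\<dots> \<longleftrightarrow> v \<in> S (Suc m)"
      using v unfolding S_def orth_krylov using less_Suc_eq by auto
    finally show ?thesis .
  qed
  have sub: "S (Suc m) \<subseteq> S m" unfolding S_def by (auto simp: orth_krylov)
  have comp: "f (Q *v v) = poly_mat (stab_poly \<omega> i (i + Suc m)) A *v v" for v
    unfolding f_def Q_def stab_Suc poly_mat_lin ..
  have "sonneveld A P \<omega> (i + Suc m) = f ` (sonneveld A P \<omega> (i + m) \<inter> orth_compl P)"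
    by (simp add: f_def)
  also have "\<dots> = f ` ((\<lambda>v. Q *v v) ` (sonneveld A P \<omega> i \<inter> S m) \<inter> orth_compl P)"
    using Suc by (simp add: Q_def S_def)
  also have "(\<lambda>v. Q *v v) ` (sonneveld A P \<omega> i \<inter> S m) \<inter> orth_compl P
      = (\<lambda>v. Q *v v) ` (sonneveld A P \<omega> i \<inter> S (Suc m))"
    using eqv sub by blast
  also have "f ` \<dots> = (\<lambda>v. poly_mat (stab_poly \<omega> i (i + Suc m)) A *v v) ` (sonneveld A P \<omega> i \<inter> S (Suc m))"
    unfolding image_image comp ..
  finally show ?case unfolding S_def .
qed

theorem lemma1:
  fixes A :: "complex^'n^'n" and P :: "(complex^'n) set" and \<omega> :: "nat \<Rightarrow> complex"
    and i j :: nat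
  assumes "vec.subspace P"
    and "\<forall>k\<ge>1. \<omega> k \<noteq> 0"
    and "i < j"
  shows "sonneveld A P \<omega> j =
    (\<lambda>v. poly_mat (stab_poly \<omega> i j) A *v v) `
      (sonneveld A P \<omega> i \<inter> orth_compl (block_krylov (conj_transpose A) P (j - i)))"
  using main[OF assms(2), of A P i "j - i"] assms(3) by simp

end
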